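(* Let $A$ and $B$ be automata with $A\le_{*T}B$. Then there exists an automaton $C$ such that $A\le_H C$ and $C\le_B B$.
   Context: An automaton $A$ consists of a set $\mathrm{states}(A)$ of states, a nonempty set $\mathrm{start}(A)\subseteq\mathrm{states}(A)$ of start states, a set $\mathrm{acts}(A)$ of actions containing a distinguished internal action $\tau$, and a set $\mathrm{steps}(A)\subseteq\mathrm{states}(A)\times\mathrm{acts}(A)\times\mathrm{states}(A)$ of steps; write $s\xrightarrow{a}_A t$ for $(s,a,t)\in\mathrm{steps}(A)$. An execution fragment of $A$ is a finite or infinite alternating sequence $s_0a_1s_1a_2s_2\cdots$ of states and actions, beginning with a state and, if finite, ending with a state, such that $s_{i-1}\xrightarrow{a_i}_A s_i$ for all $i>0$. An execution is an execution fragment whose first state is a start state. The trace of an execution fragment is the subsequence of its non-$\tau$ actions; a trace of $A$ is the trace of some execution of $A$, and $\mathrm{traces}^*(A)$ is the set of finite traces of $A$. $A\le_{*T}B$ means $\mathrm{traces}^*(A)\subseteq\mathrm{traces}^*(B)$. For a relation $R$ write $R[s]=\{u\mid (s,u)\in R\}$. A step refinement from $A$ to $B$ is a partial function $r:\mathrm{states}(A)\rightharpoonup\mathrm{states}(B)$ such that (1) if $s\in\mathrm{start}(A)$ then $s\in\mathrm{dom}(r)$ and $r(s)\in\mathrm{start}(B)$; (2) if $s\xrightarrow{a}_A t$ and $s\in\mathrm{dom}(r)$ then $t\in\mathrm{dom}(r)$ and either $r(s)=r(t)$ and $a=\tau$, or $r(s)\xrightarrow{a}_B r(t)$. A normed forward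 simulation from $A$ to $B$ is a pair $(f,n)$ where $f\subseteq\mathrm{states}(A)\times\mathrm{states}(B)$ and $n:\mathrm{steps}(A)\times\mathrm{states}(B)\to S$ for some set $S$ with a well-founded strict order $<$, such that: (1) if $s\in\mathrm{start}(A)$ then $f[s]\cap\mathrm{start}(B)\neq\emptyset$; (2) if $s\xrightarrow{a}_A t$ and $u\in f[s]$ then (a) $u\in f[t]$ and $a=\tau$, or (b) there is $v\in f[t]$ with $u\xrightarrow{a}_B v$, or (c) there is $v\in f[s]$ with $u\xrightarrow{\tau}_B v$ and $n(s\xrightarrow{a}t,v)<n(s\xrightarrow{a}t,u)$. A normed backward simulation from $A$ to $B$ is a pair $(b,n)$ where $b\subseteq\mathrm{states}(A)\times\mathrm{states}(B)$ is total (every $s\in\mathrm{states}(A)$ has $b[s]\neq\emptyset$) and $n:(\mathrm{steps}(A)\cup\mathrm{start}(A))\times\mathrm{states}(B)\to S$ for some set $S$ with a well-founded strict order $<$, such that: (1) if $s\in\mathrm{start}(A)$ and $u\in b[s]$ then (a) $u\in\mathrm{start}(B)$, or (b) there is $v\in b[s]$ with $v\xrightarrow{\tau}_B u$ and $n(s,v)<n(s,u)$; (2) if $t\xrightarrow{a}_A s$ and $u\in b[s]$ then (a) $u\in b[t]$ and $a=\tau$, or (b) there is $v\in b[t]$ with $v\xrightarrow{a}_B u$, or (c) there is $v\in b[s]$ with $v\xrightarrow{\tau}_B u$ and $n(t\xrightarrow{a}s,v)<n(t\xrightarrow{a}s,u)$. Write $A\le_B B$ if a normed backward simulation from $A$ to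 $B$ exists. A normed history relation from $A$ to $B$ is a pair $(r,n)$ such that $r$ is a step refinement from $B$ to $A$ and $(r^{-1},n)$ is a normed forward simulation from $A$ to $B$. Write $A\le_H B$ if one exists. *)

theory Defs
  imports Main "HOL-Library.Extended_Nat"
begin

text \<open>Automata. The distinguished internal action is a parameter tau shared by all automata.\<close>

record ('s, 'a) automaton =
  states :: "'s set"
  start  :: "'s set"
  acts   :: "'a set"
  steps  :: "('s \<times> 'a \<times> 's) set"

definition is_automaton :: "'a \<Rightarrow> ('s, 'a) automaton \<Rightarrow> bool" where
  "is_automaton tau A \<longleftrightarrow>
     start A \<noteq> {} \<and> start A \<subseteq> states A \<and> tau \<in> acts A \<and>
     steps A \<subseteq> states A \<times> acts A \<times> states A"

text \<open>An execution fragment of length n (n may be infinite): states ss 0, ss 1, ...,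
  and actions as 1, as 2, ... with (ss (i-1), as i, ss i) a step for 0 < i \<le> n.\<close>

definition exec_frag :: "('s, 'a) automaton \<Rightarrow> (nat \<Rightarrow> 's) \<Rightarrow> (nat \<Rightarrow> 'a) \<Rightarrow> enat \<Rightarrow> bool" where
  "exec_frag A ss as n \<longleftrightarrow> ss 0 \<in> states A \<and>
     (\<forall>i. enat (Suc i) \<le> n \<longrightarrow> (ss i, as (Suc i), ss (Suc i)) \<in> steps A)"

definition execution :: "('s, 'a) automaton \<Rightarrow> (nat \<Rightarrow> 's) \<Rightarrow> (nat \<Rightarrow> 'a) \<Rightarrow> enat \<Rightarrow> bool" where
  "execution A ss as n \<longleftrightarrow> exec_frag A ss as n \<and> ss 0 \<in> start A"

definition visible_idx :: "'a \<Rightarrow> (nat \<Rightarrow> 'a) \<Rightarrow> enat \<Rightarrow> nat set" where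
  "visible_idx tau as n = {i. 0 < i \<and> enat i \<le> n \<and> as i \<noteq> tau}"

text \<open>The trace (meaningful when the set of visible indices is finite).\<close>
definition trace_of :: "'a \<Rightarrow> (nat \<Rightarrow> 'a) \<Rightarrow> enat \<Rightarrow> 'a list" where
  "trace_of tau as n = map as (sorted_list_of_set (visible_idx tau as n))"

definition fin_traces :: "'a \<Rightarrow> ('s, 'a) automaton \<Rightarrow> 'a list set" where
  "fin_traces tau A = {\<beta>. \<exists>ss as n. execution A ss as n \<and> finite (visible_idx tau as n)
                          \<and> \<beta> = trace_of tau as n}"

definition fin_trace_incl :: "'a \<Rightarrow> ('s, 'a) automaton \<Rightarrow> ('t, 'a) automaton \<Rightarrow> bool" where
  "fin_trace_incl tau A B \<longleftrightarrow> fin_traces tau A \<subseteq> fin_traces tau B"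

definition step_refinement :: "'a \<Rightarrow> ('s, 'a) automaton \<Rightarrow> ('t, 'a) automaton \<Rightarrow> ('s \<Rightarrow> 't option) \<Rightarrow> bool" where
  "step_refinement tau A B r \<longleftrightarrow>
     (\<forall>s \<in> start A. \<exists>u. r s = Some u \<and> u \<in> start B) \<and>
     (\<forall>s a t. (s, a, t) \<in> steps A \<and> s \<in> dom r \<longrightarrow>
        t \<in> dom r \<and> ((the (r s) = the (r t) \<and> a = tau) \<or> (the (r s), a, the (r t)) \<in> steps B))"

definition wf_strict_order :: "('n \<times> 'n) set \<Rightarrow> bool" where
  "wf_strict_order lt \<longleftrightarrow> wf lt \<and> trans lt"

definition normed_forward_sim ::
  "'a \<Rightarrow> ('s, 'a) automaton \<Rightarrow> ('t, 'a) automaton \<Rightarrow> ('s \<times> 't) set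
   \<Rightarrow> ('s \<times> 'a \<times> 's \<Rightarrow> 't \<Rightarrow> 'n) \<Rightarrow> ('n \<times> 'n) set \<Rightarrow> bool" where
  "normed_forward_sim tau A B f n lt \<longleftrightarrow> wf_strict_order lt \<and>
     (\<forall>s \<in> start A. f `` {s} \<inter> start B \<noteq> {}) \<and>
     (\<forall>s a t u. (s, a, t) \<in> steps A \<and> u \<in> f `` {s} \<longrightarrow>
        (u \<in> f `` {t} \<and> a = tau) \<or>
        (\<exists>v \<in> f `` {t}. (u, a, v) \<in> steps B) \<or>
        (\<exists>v \<in> f `` {s}. (u, tau, v) \<in> steps B \<and> (n (s, a, t) v, n (s, a, t) u) \<in> lt))"

text \<open>Norm domain steps(A) \<union> start(A) encoded by a sum type: Inl step, Inr start state.\<close>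
definition normed_backward_sim ::
  "'a \<Rightarrow> ('s, 'a) automaton \<Rightarrow> ('t, 'a) automaton \<Rightarrow> ('s \<times> 't) set
   \<Rightarrow> (('s \<times> 'a \<times> 's) + 's \<Rightarrow> 't \<Rightarrow> 'n) \<Rightarrow> ('n \<times> 'n) set \<Rightarrow> bool" where
  "normed_backward_sim tau A B b n lt \<longleftrightarrow> wf_strict_order lt \<and>
     (\<forall>s \<in> states A. b `` {s} \<noteq> {}) \<and>
     (\<forall>s \<in> start A. \<forall>u \<in> b `` {s}.
        u \<in> start B \<or> (\<exists>v \<in> b `` {s}. (v, tau, u) \<in> steps B \<and> (n (Inr s) v, n (Inr s) u) \<in> lt)) \<and>
     (\<forall>t a s u. (t, a, s) \<in> steps A \<and> u \<in> b `` {s} \<longrightarrow>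
        (u \<in> b `` {t} \<and> a = tau) \<or>
        (\<exists>v \<in> b `` {t}. (v, a, u) \<in> steps B) \<or>
        (\<exists>v \<in> b `` {s}. (v, tau, u) \<in> steps B \<and> (n (Inl (t, a, s)) v, n (Inl (t, a, s)) u) \<in> lt))"

text \<open>The norm codomain S is fixed to nat (with an arbitrary well-founded strict order on it).\<close>
definition le_B :: "'a \<Rightarrow> ('s, 'a) automaton \<Rightarrow> ('t, 'a) automaton \<Rightarrow> bool" where
  "le_B tau A B \<longleftrightarrow> (\<exists>b (n :: ('s \<times> 'a \<times> 's) + 's \<Rightarrow> 't \<Rightarrow> nat) lt. normed_backward_sim tau A B b n lt)"

definition normed_history_rel ::
  "'a \<Rightarrow> ('s, 'a) automaton \<Rightarrow> ('t, 'a) automaton \<Rightarrow> ('t \<Rightarrow> 's option)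
   \<Rightarrow> ('s \<times> 'a \<times> 's \<Rightarrow> 't \<Rightarrow> 'n) \<Rightarrow> ('n \<times> 'n) set \<Rightarrow> bool" where
  "normed_history_rel tau A B r n lt \<longleftrightarrow>
     step_refinement tau B A r \<and> normed_forward_sim tau A B {(s, u). r u = Some s} n lt"

definition le_H :: "'a \<Rightarrow> ('s, 'a) automaton \<Rightarrow> ('t, 'a) automaton \<Rightarrow> bool" where
  "le_H tau A B \<longleftrightarrow> (\<exists>r (n :: ('s \<times> 'a \<times> 's) \<Rightarrow> 't \<Rightarrow> nat) lt. normed_history_rel tau A B r n lt)"

end

theory Submission
  imports Defs
begin

inductive reach :: "'a \<Rightarrow> ('s, 'a) automaton \<Rightarrow> 's \<Rightarrow> 'a list \<Rightarrow> nat \<Rightarrow> bool"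
  for tau X where
  r0: "u \<in> start X \<Longrightarrow> reach tau X u [] 0"
| rtau: "reach tau X v \<beta> k \<Longrightarrow> (v, tau, u) \<in> steps X \<Longrightarrow> reach tau X u \<beta> (Suc k)"
| rvis: "reach tau X v \<beta> k \<Longrightarrow> (v, c, u) \<in> steps X \<Longrightarrow> c \<noteq> tau \<Longrightarrow> reach tau X u (\<beta> @ [c]) (Suc k)"

definition ext :: "'a \<Rightarrow> 'a list \<Rightarrow> 'a \<Rightarrow> 'a list" where
  "ext tau \<beta> a = (if a = tau then \<beta> else \<beta> @ [a])"

lemma reach_ext: "reach tau X v \<beta> k \<Longrightarrow> (v, a, u) \<in> steps X \<Longrightarrow> reach tau X u (ext tau \<beta> a) (Suc k)"
  unfolding ext_def by (auto intro: reach.intros)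

lemma vis_Suc: "visible_idx tau as (enat (Suc m)) =
   visible_idx tau as (enat m) \<union> (if as (Suc m) = tau then {} else {Suc m})"
  unfolding visible_idx_def by (auto simp: le_Suc_eq)

lemma vis_fin: "finite (visible_idx tau as (enat m))"
  by (rule finite_subset[of _ "{..m}"]) (auto simp: visible_idx_def)

lemma vis_0: "visible_idx tau as (enat 0) = {}"
  unfolding visible_idx_def by auto

lemma sl_insert_max:
  assumes "finite S" "\<forall>x\<in>S. x < (m::nat)"
  shows "sorted_list_of_set (insert m S) = sorted_list_of_set S @ [m]"
proof -
  have "m \<notin> S" using assms by auto
  have "sorted_wrt (<) (sorted_list_of_set S @ [m]) \<and> set (sorted_list_of_set S @ [m]) = insert m S
        \<and> length (sorted_list_of_set S @ [m]) = card (insert m S)"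
    using assms \<open>m \<notin> S\<close> by (auto simp: sorted_wrt_append)
  then show ?thesis using assms(1) sorted_list_of_set_unique[of "insert m S" "sorted_list_of_set S @ [m]"] by blast
qed

lemma trace_Suc: "trace_of tau as (enat (Suc m)) =
   trace_of tau as (enat m) @ (if as (Suc m) = tau then [] else [as (Suc m)])"
proof (cases "as (Suc m) = tau")
  case True then show ?thesis unfolding trace_of_def by (simp add: vis_Suc)
next
  case False
  have "\<forall>x\<in>visible_idx tau as (enat m). x < Suc m" by (auto simp: visible_idx_def)
  then show ?thesis using False unfolding trace_of_def
    by (simp add: vis_Suc sl_insert_max[OF vis_fin] del: sorted_list_of_set_insert_remove)
qed

lemma trace_cong: "(\<forall>i\<le>k. as' i = as i) \<Longrightarrow> trace_of tau as' (enat k) = trace_of tau as (enat k)"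
proof -
  assume h: "\<forall>i\<le>k. as' i = as i"
  have v: "visible_idx tau as' (enat k) = visible_idx tau as (enat k)"
    using h unfolding visible_idx_def by auto
  show ?thesis unfolding trace_of_def v
    by (rule map_cong) (use h vis_fin in \<open>auto simp: visible_idx_def\<close>)
qed

lemma reach_exec:
  assumes "is_automaton tau X"
  shows "reach tau X s \<beta> k \<Longrightarrow> \<exists>ss as. execution X ss as (enat k) \<and> ss k = s \<and> trace_of tau as (enat k) = \<beta>"
proof (induction rule: reach.induct)
  case (r0 u)
  then show ?case using assms
    by (intro exI[of _ "\<lambda>_. u"] exI[of _ "\<lambda>_. tau"])
       (auto simp: execution_def exec_frag_def is_automaton_def trace_of_def vis_0)
next
  case (rtau v \<beta> k u)
  then obtain ss as where e: "execution X ss as (enat k)" "ss k = v" "trace_of tau as (enat k) = \<beta>" by blast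
  let ?ss = "ss(Suc k := u)" and ?as = "as(Suc k := tau)"
  have "execution X ?ss ?as (enat (Suc k))"
    using e rtau(2) unfolding execution_def exec_frag_def
    by (auto simp: less_Suc_eq_le le_Suc_eq)
  moreover have "trace_of tau ?as (enat (Suc k)) = \<beta>"
    using e trace_cong[of k ?as as tau] by (simp add: trace_Suc)
  ultimately show ?case by (metis fun_upd_same)
next
  case (rvis v \<beta> k c u)
  then obtain ss as where e: "execution X ss as (enat k)" "ss k = v" "trace_of tau as (enat k) = \<beta>" by blast
  let ?ss = "ss(Suc k := u)" and ?as = "as(Suc k := c)"
  have "execution X ?ss ?as (enat (Suc k))"
    using e rvis(2) unfolding execution_def exec_frag_def
    by (auto simp: less_Suc_eq_le le_Suc_eq)
  moreover have "trace_of tau ?as (enat (Suc k)) = \<beta> @ [c]"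
    using e rvis(3) trace_cong[of k ?as as tau] by (simp add: trace_Suc)
  ultimately show ?case by (metis fun_upd_same)
qed

lemma exec_reach:
  assumes "execution X ss as n"
  shows "enat m \<le> n \<Longrightarrow> reach tau X (ss m) (trace_of tau as (enat m)) m"
proof (induction m)
  case 0
  then show ?case using assms by (auto simp: execution_def trace_of_def vis_0 intro: r0)
next
  case (Suc m)
  have st: "(ss m, as (Suc m), ss (Suc m)) \<in> steps X"
    using assms Suc.prems unfolding execution_def exec_frag_def by blast
  have "enat m \<le> n" using Suc.prems by (meson Suc_n_not_le_n enat_ord_simps(1) le_cases order_trans)
  then have ih: "reach tau X (ss m) (trace_of tau as (enat m)) m" by (rule Suc.IH)
  show ?case using reach_ext[OF ih st] by (simp add: trace_Suc ext_def split: if_splits)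
qed

lemma fin_trace_reach:
  assumes "\<beta> \<in> fin_traces tau X"
  shows "\<exists>u k. reach tau X u \<beta> k"
proof -
  obtain ss as n where e: "execution X ss as n" "finite (visible_idx tau as n)" "\<beta> = trace_of tau as n"
    using assms unfolding fin_traces_def by blast
  show ?thesis
  proof (cases n)
    case (enat m)
    then show ?thesis using exec_reach[OF e(1), of m tau] e(3) by auto
  next
    case infinity
    obtain m where m: "\<forall>i\<in>visible_idx tau as n. i \<le> m"
      using e(2) finite_nat_set_iff_bounded_le by blast
    have "visible_idx tau as (enat m) = visible_idx tau as n"
      using m infinity unfolding visible_idx_def by auto
    then have "trace_of tau as (enat m) = \<beta>" using e(3) unfolding trace_of_def by simp
    then show ?thesis using exec_reach[OF e(1), of m tau] infinity by auto
  qed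
qed

lemma reach_fin_trace:
  assumes "is_automaton tau X" "reach tau X s \<beta> k"
  shows "\<beta> \<in> fin_traces tau X"
  using reach_exec[OF assms] vis_fin unfolding fin_traces_def by fastforce


definition mkC :: "'a \<Rightarrow> ('sa, 'a) automaton \<Rightarrow> ('sa \<times> 'a list, 'a) automaton" where
  "mkC tau A = \<lparr> states = {(s, \<beta>). \<exists>k. reach tau A s \<beta> k},
     start = {(s, []) | s. s \<in> start A},
     acts = acts A,
     steps = {((s, \<beta>), a, (t, \<beta>')). (\<exists>k. reach tau A s \<beta> k) \<and> (s, a, t) \<in> steps A \<and> \<beta>' = ext tau \<beta> a} \<rparr>"

lemma C_aut: assumes "is_automaton tau A" shows "is_automaton tau (mkC tau A)"
proof -
  obtain s where "s \<in> start A" using assms unfolding is_automaton_def by blast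
  then have "(s, []) \<in> start (mkC tau A)" by (simp add: mkC_def)
  then show ?thesis using assms unfolding is_automaton_def mkC_def
    by (auto intro: r0 reach_ext)
qed

lemma C_H: fixes A :: "('sa, 'a) automaton" assumes "is_automaton tau A" shows "le_H tau A (mkC tau A)"
proof -
  define r where "r = (\<lambda>(s::'sa, \<beta>::'a list). if \<exists>k. reach tau A s \<beta> k then Some s else None)"
  have sr: "step_refinement tau (mkC tau A) A r"
    unfolding step_refinement_def r_def mkC_def by (auto intro: r0 reach_ext split: if_splits)
  have st: "{(s, u). r u = Some s} `` {s} \<inter> start (mkC tau A) \<noteq> {}" if "s \<in> start A" for s
  proof -
    have "(s, []) \<in> {(s, u). r u = Some s} `` {s} \<inter> start (mkC tau A)"
      using that unfolding r_def mkC_def by (auto intro: r0)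
    then show ?thesis by blast
  qed
  have fs: "normed_forward_sim tau A (mkC tau A) {(s, u). r u = Some s} (\<lambda>_ _. 0::nat) {}"
    using st unfolding normed_forward_sim_def wf_strict_order_def r_def mkC_def
    by (auto intro: r0 reach_ext split: if_splits)
  show ?thesis unfolding le_H_def normed_history_rel_def using sr fs by blast
qed

lemma reach_cases:
  "reach tau X u \<beta> k \<Longrightarrow>
   (k = 0 \<and> \<beta> = [] \<and> u \<in> start X) \<or>
   (\<exists>k' v. k = Suc k' \<and> reach tau X v \<beta> k' \<and> (v, tau, u) \<in> steps X) \<or>
   (\<exists>k' v c \<gamma>. k = Suc k' \<and> reach tau X v \<gamma> k' \<and> (v, c, u) \<in> steps X \<and> c \<noteq> tau \<and> \<beta> = \<gamma> @ [c])"
  by (erule reach.cases) auto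

lemma C_B:
  fixes A :: "('sa, 'a) automaton" and B :: "('sb, 'a) automaton"
  assumes "is_automaton tau A" "fin_trace_incl tau A B"
  shows "le_B tau (mkC tau A) B"
proof -
  define b where "b = {((s::'sa, \<beta>::'a list), u). \<exists>k. reach tau B u \<beta> k}"
  define tg where "tg = (\<lambda>x::('sa \<times> 'a list) \<times> 'a \<times> ('sa \<times> 'a list) + ('sa \<times> 'a list).
      case x of Inl (_, _, s) \<Rightarrow> snd s | Inr s \<Rightarrow> snd s)"
  define n where "n = (\<lambda>x u. LEAST k. reach tau B u (tg x) k)"
  have nle: "n x u \<le> k" if "reach tau B u (tg x) k" for x u k
    unfolding n_def using that by (rule Least_le)
  have nre: "reach tau B u (tg x) (n x u)" if "reach tau B u (tg x) k" for x u k
    unfolding n_def using that by (rule LeastI)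
  have tot: "\<forall>s \<in> states (mkC tau A). b `` {s} \<noteq> {}"
  proof
    fix s assume "s \<in> states (mkC tau A)"
    then obtain s0 \<beta> k where s: "s = (s0, \<beta>)" "reach tau A s0 \<beta> k" by (auto simp: mkC_def)
    then have "\<beta> \<in> fin_traces tau B" using reach_fin_trace[OF assms(1)] assms(2)
      unfolding fin_trace_incl_def by blast
    then obtain u k' where "reach tau B u \<beta> k'" using fin_trace_reach[of \<beta> tau B] by blast
    then show "b `` {s} \<noteq> {}" using s unfolding b_def by auto
  qed
  have stc: "u \<in> start B \<or> (\<exists>v \<in> b `` {s}. (v, tau, u) \<in> steps B \<and> (n (Inr s) v, n (Inr s) u) \<in> less_than)"
    if H: "s \<in> start (mkC tau A)" "u \<in> b `` {s}" for s u
  proof -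
    obtain s0 where s: "s = (s0, [])" using H(1) unfolding mkC_def by force
    obtain k where "reach tau B u [] k" using H(2) s b_def by auto
    then have "reach tau B u (tg (Inr s)) k" using s tg_def by simp
    then have r: "reach tau B u (tg (Inr s)) (n (Inr s) u)" by (rule nre)
    from reach_cases[OF r] show ?thesis
    proof (elim disjE exE conjE)
      fix k' v assume "n (Inr s) u = Suc k'" "reach tau B v (tg (Inr s)) k'" "(v, tau, u) \<in> steps B"
      then show ?thesis using nle[of v "Inr s" k'] s unfolding b_def tg_def by force
    qed (auto simp: s tg_def)
  qed
  have stp: "(u \<in> b `` {t} \<and> a = tau) \<or> (\<exists>v \<in> b `` {t}. (v, a, u) \<in> steps B) \<or>
        (\<exists>v \<in> b `` {s}. (v, tau, u) \<in> steps B \<and> (n (Inl (t, a, s)) v, n (Inl (t, a, s)) u) \<in> less_than)"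
    if H: "(t, a, s) \<in> steps (mkC tau A)" "u \<in> b `` {s}" for t a s u
  proof -
    obtain t0 \<beta> s0 where ts: "t = (t0, \<beta>)" "s = (s0, ext tau \<beta> a)"
      using H(1) unfolding mkC_def by force
    let ?x = "Inl (t, a, s)"
    have tgx: "tg ?x = ext tau \<beta> a" using ts tg_def by simp
    obtain k where "reach tau B u (ext tau \<beta> a) k" using H(2) ts b_def by auto
    then have "reach tau B u (tg ?x) k" using tgx by simp
    then have r: "reach tau B u (tg ?x) (n ?x u)" by (rule nre)
    from reach_cases[OF r] show ?thesis
    proof (elim disjE exE conjE)
      assume "n ?x u = 0" "tg ?x = []" "u \<in> start B"
      then have "a = tau" "\<beta> = []" using tgx by (auto simp: ext_def split: if_splits)
      then show ?thesis using \<open>u \<in> start B\<close> ts unfolding b_def by (auto intro: r0)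
    next
      fix k' v assume "n ?x u = Suc k'" "reach tau B v (tg ?x) k'" "(v, tau, u) \<in> steps B"
      then show ?thesis using nle[of v ?x k'] ts tgx unfolding b_def by force
    next
      fix k' v c \<gamma> assume h: "n ?x u = Suc k'" "reach tau B v \<gamma> k'" "(v, c, u) \<in> steps B"
        "c \<noteq> tau" "tg ?x = \<gamma> @ [c]"
      show ?thesis
      proof (cases "a = tau")
        case True
        then have "reach tau B u \<beta> (n ?x u)" using r tgx by (simp add: ext_def)
        then show ?thesis using True ts unfolding b_def by auto
      next
        case False
        then have "\<gamma> = \<beta>" "c = a" using h(5) tgx by (auto simp: ext_def)
        then show ?thesis using h ts unfolding b_def by auto
      qed
    qed
  qed
  have "normed_backward_sim tau (mkC tau A) B b n less_than"
    unfolding normed_backward_sim_def wf_strict_order_def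
    using tot stc stp by (auto simp: trans_less_than)
  then show ?thesis unfolding le_B_def by blast
qed

theorem mainTheorem3:
  fixes tau :: 'a and A :: "('sa, 'a) automaton" and B :: "('sb, 'a) automaton"
  assumes "is_automaton tau A" and "is_automaton tau B"
    and "fin_trace_incl tau A B"
  shows "\<exists>C :: ('sa \<times> 'a list, 'a) automaton.
           is_automaton tau C \<and> le_H tau A C \<and> le_B tau C B"
  using C_aut[OF assms(1)] C_H[OF assms(1)] C_B[OF assms(1) assms(3)] by blast

end
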